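(* Let $f\in\widehat{\operatorname{PC}^{+}}$ be right-continuous. Then $\varepsilon(f,\mathcal P)=0$ for every partition $\mathcal P$ associated with $f$.
   Context: $X=[0,1[$; $\widehat{\operatorname{PC}^{\bowtie}}$ is the group of bijections $X\to X$ continuous outside a finite subset, containing the group ${\mathfrak S}_{\mathrm{fin}}$ of finitely supported permutations with classical signature $\operatorname{sgn}$ valued in $\mathbb{Z}/2\mathbb{Z}$. For $h\in\widehat{\operatorname{PC}^{\bowtie}}$, a partition associated with $h$ is a finite partition $\mathcal P=\{I_1,\dots,I_n\}$ of $X$ into intervals $I_j=[\alpha_j,b_j[$ such that $h$ is continuous on $I_j^\circ=]\alpha_j,b_j[$ for each $j$ (so $h$ is strictly monotone there and $h(I_j^\circ)$ is an open interval). $\widehat{\operatorname{PC}^{+}}$ is the subgroup of $h\in\widehat{\operatorname{PC}^{\bowtie}}$ that are increasing on each $I_j^\circ$ for some associated partition. Let $\beta_j$ be the left endpoint of $h(I_j^\circ)$; $\{h(\alpha_j)\}=\{\beta_j\}$, and $\sigma_{(h,\mathcal P)}\in{\mathfrak S}_{\mathrm{fin}}$ sends $h(\alpha_j)$ to $\beta_j$ for each $j$ and fixes all other points. $R(h,\mathcal P)$ is the number of $j$ with $h$ decreasing on $I_j^\circ$, and $\varepsilon(h,\mathcal P)=R(h,\mathcal P)+\operatorname{sgn}(\sigma_{(h,\mathcal P)})\bmod 2$. *)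

theory Defs
  imports "HOL-Analysis.Analysis" "HOL-Combinatorics.Permutations"
begin

definition X :: "real set" where "X = {0..<1}"

definition PCbowtie :: "(real \<Rightarrow> real) set" where
  "PCbowtie = {h. bij_betw h X X \<and>
     (\<exists>F. finite F \<and> (\<forall>x\<in>X - F. continuous (at x within X) h))}"

definition is_interval_partition :: "(real \<times> real) set \<Rightarrow> bool" where
  "is_interval_partition P \<longleftrightarrow> finite P \<and> (\<forall>(a,b)\<in>P. a < b) \<and>
     (\<forall>p\<in>P. \<forall>q\<in>P. p \<noteq> q \<longrightarrow> {fst p..<snd p} \<inter> {fst q..<snd q} = {}) \<and>
     (\<Union>(a,b)\<in>P. {a..<b}) = X"

definition associated_partition :: "(real \<Rightarrow> real) \<Rightarrow> (real \<times> real) set \<Rightarrow> bool" where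
  "associated_partition h P \<longleftrightarrow> is_interval_partition P \<and>
     (\<forall>(a,b)\<in>P. continuous_on {a<..<b} h)"

definition incr_on :: "(real \<Rightarrow> real) \<Rightarrow> real set \<Rightarrow> bool" where
  "incr_on h S \<longleftrightarrow> (\<forall>x\<in>S. \<forall>y\<in>S. x < y \<longrightarrow> h x < h y)"

definition decr_on :: "(real \<Rightarrow> real) \<Rightarrow> real set \<Rightarrow> bool" where
  "decr_on h S \<longleftrightarrow> (\<forall>x\<in>S. \<forall>y\<in>S. x < y \<longrightarrow> h y < h x)"

definition PCplus :: "(real \<Rightarrow> real) set" where
  "PCplus = {h \<in> PCbowtie. \<exists>P. associated_partition h P \<and>
              (\<forall>(a,b)\<in>P. incr_on h {a<..<b})}"

definition beta :: "(real \<Rightarrow> real) \<Rightarrow> real \<times> real \<Rightarrow> real" where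
  "beta h I = Inf (h ` {fst I<..<snd I})"

definition sigma_hP :: "(real \<Rightarrow> real) \<Rightarrow> (real \<times> real) set \<Rightarrow> real \<Rightarrow> real" where
  "sigma_hP h P y = (if \<exists>I\<in>P. h (fst I) = y
                     then beta h (THE I. I \<in> P \<and> h (fst I) = y) else y)"

definition R_hP :: "(real \<Rightarrow> real) \<Rightarrow> (real \<times> real) set \<Rightarrow> nat" where
  "R_hP h P = card {I \<in> P. decr_on h {fst I<..<snd I}}"

definition sgn2 :: "(real \<Rightarrow> real) \<Rightarrow> nat" where
  "sgn2 p = (if evenperm p then 0 else 1)"

definition eps_hP :: "(real \<Rightarrow> real) \<Rightarrow> (real \<times> real) set \<Rightarrow> nat" where
  "eps_hP h P = (R_hP h P + sgn2 (sigma_hP h P)) mod 2"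

end

theory Submission
  imports Defs
begin

lemma part_mem:
  assumes "is_interval_partition P" "I \<in> P"
  shows "fst I < snd I" "{fst I..<snd I} \<subseteq> X"
  using assms unfolding is_interval_partition_def by (auto simp: case_prod_beta)

lemma part_cover:
  assumes "is_interval_partition P" "x \<in> X"
  shows "\<exists>I\<in>P. fst I \<le> x \<and> x < snd I"
proof -
  have "x \<in> (\<Union>(a,b)\<in>P. {a..<b})" using assms unfolding is_interval_partition_def by simp
  then obtain I where "I \<in> P" "x \<in> {fst I..<snd I}" by (auto simp: case_prod_beta)
  then show ?thesis by auto
qed

lemma part_unique:
  assumes "is_interval_partition P" "I \<in> P" "J \<in> P" "fst I = fst J"
  shows "I = J"
proof (rule ccontr)
  assume "I \<noteq> J"
  then have "{fst I..<snd I} \<inter> {fst J..<snd J} = {}"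
    using assms unfolding is_interval_partition_def by blast
  moreover have "fst I \<in> {fst I..<snd I}" "fst I \<in> {fst J..<snd J}"
    using part_mem[OF assms(1,2)] part_mem[OF assms(1,3)] assms(4) by auto
  ultimately show False by blast
qed

lemma local_incr:
  assumes P': "is_interval_partition P'" "\<forall>(c,d)\<in>P'. incr_on f {c<..<d}"
    and aX: "a \<in> X" and ab: "a < b"
  shows "\<exists>x y. a < x \<and> x < y \<and> y < b \<and> (\<forall>t. a < t \<and> t \<le> y \<longrightarrow> (\<forall>s. t < s \<and> s \<le> y \<longrightarrow> f t < f s))"
proof -
  obtain J where J: "J \<in> P'" "fst J \<le> a" "a < snd J" using part_cover[OF P'(1) aX] by blast
  have inc: "incr_on f {fst J<..<snd J}" using P'(2) J(1) by (auto simp: case_prod_beta)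
  define e where "e = min b (snd J)"
  have ae: "a < e" using ab J by (simp add: e_def)
  define x where "x = a + (e - a)/3"
  define y where "y = a + 2*(e - a)/3"
  have "e \<le> b" "e \<le> snd J" by (auto simp: e_def)
  have "a < x" "x < y" "y < e" using ae unfolding x_def y_def by (simp_all add: field_simps)
  then have "y < b" "y < snd J" using `e \<le> b` `e \<le> snd J` by linarith+
  moreover have "\<forall>t. a < t \<and> t \<le> y \<longrightarrow> (\<forall>s. t < s \<and> s \<le> y \<longrightarrow> f t < f s)"
    using inc J `y < snd J` unfolding incr_on_def by auto
  ultimately show ?thesis using `a < x` `x < y` by blast
qed

lemma beta_eq:
  assumes P': "is_interval_partition P'" "\<forall>(c,d)\<in>P'. incr_on f {c<..<d}"
    and inj: "inj_on f X"
    and rc: "(f \<longlongrightarrow> f a) (at_right a)"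
    and cont: "continuous_on {a<..<b} f"
    and ab: "a < b" and sub: "{a..<b} \<subseteq> X"
  shows "Inf (f ` {a<..<b}) = f a"
proof -
  have aX: "a \<in> X" using sub ab by auto
  obtain x y where xy: "a < x" "x < y" "y < b"
    and inc: "\<forall>t. a < t \<and> t \<le> y \<longrightarrow> (\<forall>s. t < s \<and> s \<le> y \<longrightarrow> f t < f s)"
    using local_incr[OF P' aX ab] by blast
  have "f a \<le> f x"
  proof (rule tendsto_upperbound[OF rc])
    show "eventually (\<lambda>t. f t \<le> f x) (at_right a)"
      using eventually_at_right_real[OF xy(1)] by eventually_elim (use inc xy in \<open>auto intro: less_imp_le\<close>)
  qed simp
  also have "f x < f y" using inc xy by auto
  finally have fy: "f a < f y" .
  have lb: "f a < f t" if t: "t \<in> {a<..<b}" for t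
  proof (rule ccontr)
    assume "\<not> f a < f t"
    moreover have "t \<in> X" using t sub by auto
    then have "f t \<noteq> f a" using inj_on_contraD[OF inj _ _ aX, of t] t by auto
    ultimately have ft: "f t < f a" by simp
    have "\<exists>z. z \<in> {a<..<b} \<and> f z = f a"
    proof (cases "t \<le> y")
      case True
      have "continuous_on {t..y} f" using cont by (rule continuous_on_subset) (use t xy in auto)
      then obtain z where "t \<le> z" "z \<le> y" "f z = f a"
        using IVT'[of f t "f a" y] ft fy True by auto
      then show ?thesis using t xy by (intro exI[of _ z]) auto
    next
      case False
      have "continuous_on {y..t} f" using cont by (rule continuous_on_subset) (use t xy False in auto)
      then obtain z where "y \<le> z" "z \<le> t" "f z = f a"
        using IVT2'[of f t "f a" y] ft fy False by auto
      then show ?thesis using t xy by (intro exI[of _ z]) auto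
    qed
    then obtain z where z: "z \<in> {a<..<b}" "f z = f a" by blast
    moreover have "z \<in> X" using z sub by auto
    ultimately have "z = a" using inj_onD[OF inj _ _ aX] by blast
    then show False using z by simp
  qed
  have ne: "f ` {a<..<b} \<noteq> {}" using ab by auto
  have bdd: "bdd_below (f ` {a<..<b})" using lb by (auto intro!: bdd_belowI[of _ "f a"] less_imp_le)
  have "f a \<le> Inf (f ` {a<..<b})" using lb by (intro cInf_greatest[OF ne]) (auto intro: less_imp_le)
  moreover have "Inf (f ` {a<..<b}) \<le> f a"
  proof (rule tendsto_lowerbound[OF rc])
    show "eventually (\<lambda>t. Inf (f ` {a<..<b}) \<le> f t) (at_right a)"
      using eventually_at_right_real[OF ab] by eventually_elim (use bdd in \<open>auto intro: cInf_lower\<close>)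
  qed simp
  ultimately show ?thesis by simp
qed

theorem proposition3p5:
  fixes f :: "real \<Rightarrow> real"
  assumes "f \<in> PCplus"
    and "\<forall>x\<in>X. continuous (at_right x) f"
    and "associated_partition f P"
  shows "eps_hP f P = 0"
proof -
  obtain P' where P': "associated_partition f P'" "\<forall>(a,b)\<in>P'. incr_on f {a<..<b}"
    using assms(1) unfolding PCplus_def by blast
  have P'i: "is_interval_partition P'" using P'(1) unfolding associated_partition_def by simp
  have inj: "inj_on f X" using assms(1) unfolding PCplus_def PCbowtie_def bij_betw_def by blast
  have Pi: "is_interval_partition P" using assms(3) unfolding associated_partition_def by simp
  have contP: "continuous_on {fst I<..<snd I} f" if "I \<in> P" for I
    using assms(3) that unfolding associated_partition_def by (auto simp: case_prod_beta)
  have rc: "(f \<longlongrightarrow> f a) (at_right a)" if "a \<in> X" for a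
    using assms(2) that by (simp add: continuous_within)
  have R0: "{I \<in> P. decr_on f {fst I<..<snd I}} = {}"
  proof (rule ccontr)
    assume "{I \<in> P. decr_on f {fst I<..<snd I}} \<noteq> {}"
    then obtain I where I: "I \<in> P" "decr_on f {fst I<..<snd I}" by blast
    have "fst I \<in> X" using part_mem[OF Pi I(1)] by auto
    then obtain x y where "fst I < x" "x < y" "y < snd I"
      and inc: "\<forall>t. fst I < t \<and> t \<le> y \<longrightarrow> (\<forall>s. t < s \<and> s \<le> y \<longrightarrow> f t < f s)"
      using local_incr[OF P'i P'(2) _ part_mem(1)[OF Pi I(1)]] by blast
    moreover have "f y < f x" using I(2) `fst I < x` `x < y` `y < snd I` unfolding decr_on_def by auto
    ultimately show False by force
  qed
  have beta: "beta f I = f (fst I)" if "I \<in> P" for I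
    unfolding beta_def
    using beta_eq[OF P'i P'(2) inj rc contP[OF that] part_mem[OF Pi that]] part_mem[OF Pi that]
    by auto
  have sid: "sigma_hP f P = id"
  proof
    fix y
    show "sigma_hP f P y = id y"
    proof (cases "\<exists>I\<in>P. f (fst I) = y")
      case True
      then obtain I where I: "I \<in> P" "f (fst I) = y" by blast
      have "(THE J. J \<in> P \<and> f (fst J) = y) = I"
      proof (rule the_equality)
        show "I \<in> P \<and> f (fst I) = y" using I by simp
      next
        fix J assume J: "J \<in> P \<and> f (fst J) = y"
        have JX: "fst J \<in> X" using part_mem[OF Pi, of J] J by auto
        have IX: "fst I \<in> X" using part_mem[OF Pi I(1)] by auto
        have "f (fst J) = f (fst I)" using J I by simp
        then have "fst J = fst I" using inj_onD[OF inj _ JX IX] by blast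
        then show "J = I" using part_unique[OF Pi] J I by blast
      qed
      then show ?thesis using True I beta unfolding sigma_hP_def by simp
    next
      case False
      then show ?thesis unfolding sigma_hP_def by simp
    qed
  qed
  show ?thesis unfolding eps_hP_def R_hP_def R0 sid sgn2_def by (simp add: evenperm_id)
qed

end
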